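(* Let $m\ge 0$ and $n\ge 1$ be integers. For $0\le s\le m$ define $$P_{m,s}(q)=\frac{\prod_{j=0}^{s}(1-q^{m+1-j})}{(1-q)^{3s}}\sum_{k=0}^{s}\frac{(-1)^{s-k}}{1-q^{m+1-k}}\left[\binom{2m}{k}-\binom{2m}{k-2}\right]\sum_{i=0}^{s-k}\frac{m-k+1}{m-s+1}\binom{m-s+i}{i}\binom{m-k-i}{s-k-i}q^{s-k-i}.$$ Then each $P_{m,s}(q)$ is a polynomial in $\mathbb{Z}[q]$, and $$S_{2m+1,n}(q)=\sum_{k=0}^{m}(-1)^kP_{m,k}(q)\frac{(1-q^n)^{m+1-k}(1-q^{n+1})^{m+1-k}q^{kn}}{(1-q^2)(1-q)^{2m-3k}\prod_{i=0}^{k}(1-q^{m+1-i})}.$$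
   Context: $q$ is an indeterminate and $q^{1/2}$ a fixed formal square root of $q$; identities are identities of rational functions in $q^{1/2}$. For integers $m,n\ge1$, $$S_{m,n}(q)=\sum_{k=1}^{n}\frac{1-q^{2k}}{1-q^2}\left(\frac{1-q^k}{1-q}\right)^{m-1}q^{\frac{m+1}{2}(n-k)}.$$ Binomial coefficients $\binom{a}{b}$ with integers $a,b$ are taken to be $0$ when $b<0$ or when $0\le a<b$. *)

theory Defs
  imports "HOL-Computational_Algebra.Computational_Algebra"
begin

text \<open>We work in the field of rational functions in the formal square root
  t = q^(1/2), i.e. the fraction field of Z[t]; the indeterminate q is t^2.\<close>

type_synonym rf = "int poly fract"

definition qh :: rf where "qh = to_fract [:0, 1:]"

definition qq :: rf where "qq = qh ^ 2"

text \<open>Integer binomial coefficients: 0 when b < 0 or 0 <= a < b; for a < 0 the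
  usual generalized binomial (upper negation); that case never occurs below.\<close>
definition ibinom :: "int \<Rightarrow> int \<Rightarrow> int" where
  "ibinom a b = (if b < 0 then 0
     else if 0 \<le> a then int (nat a choose nat b)
     else (-1) ^ nat b * int (nat (b - a - 1) choose nat b))"

definition S :: "nat \<Rightarrow> nat \<Rightarrow> rf" where
  "S m n = (\<Sum>k=1..n. (1 - qq ^ (2*k)) / (1 - qq ^ 2) * ((1 - qq ^ k) / (1 - qq)) ^ (m - 1)
              * qh ^ ((m + 1) * (n - k)))"

definition P :: "nat \<Rightarrow> nat \<Rightarrow> rf" where
  "P m s = (\<Prod>j=0..s. 1 - qq ^ (m + 1 - j)) / (1 - qq) ^ (3*s) *
     (\<Sum>k=0..s. (-1) ^ (s - k) / (1 - qq ^ (m + 1 - k))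
        * of_int (ibinom (2 * int m) (int k) - ibinom (2 * int m) (int k - 2))
        * (\<Sum>i=0..s-k. of_int (int m - int k + 1) / of_int (int m - int s + 1)
             * of_int (ibinom (int m - int s + int i) (int i))
             * of_int (ibinom (int m - int k - int i) (int s - int k - int i))
             * qq ^ (s - k - i)))"

definition poly_in_q :: "int poly \<Rightarrow> rf" where
  "poly_in_q p = to_fract (p \<circ>\<^sub>p [:0, 0, 1:])"

end

theory Submission
  imports Defs
begin


definition geo :: "'a::comm_ring_1 \<Rightarrow> 'a fps" where "geo c = Abs_fps (\<lambda>n. c^n)"

lemma geo_nth [simp]: "geo c $ n = c ^ n" by (simp add: geo_def)

lemma geo_inv: "(1 - fps_const c * fps_X) * geo c = 1"
proof -
  have "(1 - fps_const c * fps_X) * geo c = geo c - fps_const c * (fps_X * geo c)"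
    by (simp add: algebra_simps)
  also have "\<dots> = 1"
    by (auto simp: fps_eq_iff power_eq_if)
  finally show ?thesis .
qed

lemma geo_deriv: "fps_deriv (geo (c::'a::comm_ring_1)) = fps_const c * geo c * geo c"
proof -
  have "fps_deriv ((1 - fps_const c * fps_X) * geo c) = 0" by (simp add: geo_inv)
  hence h: "(1 - fps_const c * fps_X) * fps_deriv (geo c) = fps_const c * geo c"
    by (simp add: algebra_simps)
  have "fps_deriv (geo c) = (geo c * (1 - fps_const c * fps_X)) * fps_deriv (geo c)"
    using geo_inv[of c] by (simp add: mult.commute)
  also have "\<dots> = geo c * ((1 - fps_const c * fps_X) * fps_deriv (geo c))"
    by (simp only: mult.assoc)
  also have "\<dots> = fps_const c * geo c * geo c" unfolding h by (simp add: ac_simps)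
  finally show ?thesis .
qed

lemma geo_power_nth: "(geo c ^ Suc p) $ a = of_nat ((p + a) choose a) * c ^ a"
proof (induction p arbitrary: a)
  case 0 then show ?case by simp
next
  case (Suc p)
  have "(geo c ^ Suc (Suc p)) $ a = (geo c * geo c ^ Suc p) $ a" by (simp only: power_Suc)
  also have "\<dots> = (\<Sum>i=0..a. c^i * (geo c ^ Suc p) $ (a-i))" by (simp add: fps_mult_nth)
  also have "\<dots> = (\<Sum>i=0..a. c^i * (of_nat ((p + (a - i)) choose (a - i)) * c^(a-i)))"
    by (simp only: Suc.IH)
  also have "\<dots> = (\<Sum>i=0..a. of_nat ((p + (a - i)) choose (a - i))) * c^a"
  proof -
    have "\<And>i. i \<in> {0..a} \<Longrightarrow> c^i * (of_nat ((p + (a - i)) choose (a - i)) * c^(a-i))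
          = of_nat ((p + (a - i)) choose (a - i)) * c^a"
    proof -
      fix i assume "i \<in> {0..a}"
      hence "c^i * c^(a-i) = c^a" by (simp flip: power_add)
      thus "c^i * (of_nat ((p + (a - i)) choose (a - i)) * c^(a-i))
          = of_nat ((p + (a - i)) choose (a - i)) * c^a" by (metis mult.left_commute)
    qed
    thus ?thesis by (simp add: sum_distrib_right)
  qed
  also have "(\<Sum>i=0..a. of_nat ((p + (a - i)) choose (a - i))) = (\<Sum>j=0..a. of_nat ((p + j) choose j) :: 'a)"
    by (subst sum.atLeastAtMost_rev) simp
  also have "\<dots> = of_nat (Suc (p + a) choose a)"
    by (simp add: atLeast0AtMost sum_choose_lower flip: of_nat_sum)
  finally show ?case by simp
qed

lemma ring_aux:
  fixes X x y gx gy g1 gxy s :: "'a::idom"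
  assumes "(1 - x*X)*gx = 1" "(1-y*X)*gy = 1" "(1-X)*g1 = 1" "(1-x*y*X)*gxy = 1" "s = (1-x)*(1-y)"
  shows "(1 - s*X*gx*gy)*(g1 - x*gx - y*gy + x*y*gxy) = s*(gx*gy + X*(x*gx*gx*gy + y*gx*gy*gy))"
  using assms by algebra

lemma lemmaC_fps:
  fixes x y :: "'a::field_char_0"
  assumes N: "N \<ge> 1"
  shows "(1 - x^N) * (1 - y^N) = (\<Sum>p<N. of_nat N / of_nat (Suc p) * ((1-x)*(1-y))^(Suc p) *
      (\<Sum>a=0..N - Suc p. of_nat ((p + a) choose a) * x^a * (of_nat ((p + (N - Suc p - a)) choose (N - Suc p - a)) * y^(N - Suc p - a))))"
proof -
  define s where "s = (1-x)*(1-y)"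
  define W where "W = fps_const s * fps_X * geo x * geo y"
  define \<Phi> where "\<Phi> = geo 1 - fps_const x * geo x - fps_const y * geo y + fps_const (x*y) * geo (x*y)"
  have Phin: "\<Phi> $ n = (1 - x^Suc n) * (1 - y^Suc n)" for n
    by (simp add: \<Phi>_def algebra_simps power_mult_distrib)
  have dW: "fps_deriv W = fps_const s * (geo x * geo y + fps_X * (fps_const x * geo x * geo x * geo y + fps_const y * geo x * geo y * geo y))"
    by (simp add: W_def geo_deriv algebra_simps)
  have g1: "(1 - fps_const x * fps_X) * geo x = 1" "(1 - fps_const y * fps_X) * geo y = 1"
     "(1 - fps_X) * geo 1 = 1" "(1 - fps_const x * fps_const y * fps_X) * geo (x*y) = 1"
    using geo_inv[of x] geo_inv[of y] geo_inv[of 1] geo_inv[of "x*y"] by (simp_all add: fps_const_mult[symmetric] del: fps_const_mult)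
  have gs: "fps_const s = (1 - fps_const x) * (1 - fps_const y)"
    by (simp add: s_def fps_const_mult[symmetric] fps_const_sub[symmetric] del: fps_const_mult)
  have "(1 - fps_const s * fps_X * geo x * geo y) * (geo 1 - fps_const x * geo x - fps_const y * geo y + fps_const x * fps_const y * geo (x*y)) = fps_const s * (geo x * geo y + fps_X * (fps_const x * geo x * geo x * geo y + fps_const y * geo x * geo y * geo y))"
    by (rule ring_aux[OF g1 gs])
  hence "(1 - W) * \<Phi> = fps_const s * (geo x * geo y + fps_X * (fps_const x * geo x * geo x * geo y + fps_const y * geo x * geo y * geo y))"
    by (simp add: W_def \<Phi>_def fps_const_mult[symmetric] del: fps_const_mult)
  hence key: "(1 - W) * \<Phi> = fps_deriv W" by (simp only: dW)
  have Wpow: "W^k = fps_X^k * (fps_const (s^k) * geo x ^ k * geo y ^ k)" for k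
    by (simp add: W_def power_mult_distrib fps_const_power ac_simps)
  have WN0: "(W^N * \<Phi>) $ (N-1) = 0"
    using N by (simp add: Wpow mult.assoc fps_X_power_mult_nth)
  have sumW: "(\<Sum>p<N. W^p * fps_deriv W) $ (N-1) = \<Phi> $ (N-1)"
  proof -
    have "(\<Sum>p<N. W^p * fps_deriv W) = (\<Sum>p<N. W^p) * ((1 - W) * \<Phi>)"
      by (simp add: key sum_distrib_right)
    also have "\<dots> = (1 - W^N) * \<Phi>"
      by (simp add: one_diff_power_eq[of W N] ac_simps)
    also have "\<dots> = \<Phi> - W^N * \<Phi>" by (simp add: algebra_simps)
    finally show ?thesis using WN0 by simp
  qed
  have D: "of_nat N * (W^Suc p) $ N = of_nat (Suc p) * (W^p * fps_deriv W) $ (N-1)" for p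
  proof -
    have "fps_deriv (W^Suc p) $ (N-1) = (fps_const (of_nat (Suc p)) * fps_deriv W * W^p) $ (N-1)"
      by (simp only: fps_deriv_power diff_Suc_1)
    moreover have "fps_deriv (W^Suc p) $ (N-1) = of_nat N * (W^Suc p) $ N"
    proof -
      have "N - 1 + 1 = N" using N by simp
      thus ?thesis by (simp only: fps_deriv_nth)
    qed
    moreover have "(fps_const (of_nat (Suc p)) * fps_deriv W * W^p) $ (N-1) = of_nat (Suc p) * (W^p * fps_deriv W) $ (N-1)"
      by (simp only: mult.assoc fps_mult_left_const_nth mult.commute[of "fps_deriv W"])
    ultimately show ?thesis by simp
  qed
  have E: "(W^Suc p) $ N = s^Suc p * (\<Sum>a=0..N - Suc p. of_nat ((p + a) choose a) * x^a * (of_nat ((p + (N - Suc p - a)) choose (N - Suc p - a)) * y^(N - Suc p - a)))"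
    if "p < N" for p
  proof -
    have "W^Suc p = fps_X^Suc p * (fps_const (s^Suc p) * (geo x ^ Suc p * geo y ^ Suc p))"
      by (simp only: Wpow mult.assoc)
    hence "(W^Suc p) $ N = (fps_const (s^Suc p) * (geo x ^ Suc p * geo y ^ Suc p)) $ (N - Suc p)"
      using that by (simp only: fps_X_power_mult_nth) simp
    also have "\<dots> = s^Suc p * (\<Sum>a=0..N - Suc p. (geo x ^ Suc p) $ a * (geo y ^ Suc p) $ (N - Suc p - a))"
      by (simp only: fps_mult_left_const_nth) (simp only: fps_mult_nth)
    finally show ?thesis by (simp only: geo_power_nth mult.assoc)
  qed
  have "(1 - x^N) * (1 - y^N) = \<Phi> $ (N-1)" using N by (simp add: Phin)
  also have "\<dots> = (\<Sum>p<N. (W^p * fps_deriv W) $ (N-1))" by (simp only: sumW[symmetric] fps_sum_nth)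
  also have "\<dots> = (\<Sum>p<N. of_nat N / of_nat (Suc p) * (W^Suc p) $ N)"
  proof (rule sum.cong[OF refl])
    fix p assume "p \<in> {..<N}"
    have "(of_nat (Suc p) :: 'a) \<noteq> 0" by (simp del: of_nat_Suc)
    with D[of p] show "(W^p * fps_deriv W) $ (N-1) = of_nat N / of_nat (Suc p) * (W^Suc p) $ N"
      by (simp add: field_simps)
  qed
  also have "\<dots> = (\<Sum>p<N. of_nat N / of_nat (Suc p) * ((1-x)*(1-y))^(Suc p) *
      (\<Sum>a=0..N - Suc p. of_nat ((p + a) choose a) * x^a * (of_nat ((p + (N - Suc p - a)) choose (N - Suc p - a)) * y^(N - Suc p - a))))"
    by (rule sum.cong[OF refl]) (simp only: E lessThan_iff s_def mult.assoc)
  finally show ?thesis .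
qed



lemma lemmaC:
  fixes x y :: "'a::field_char_0"
  assumes N: "N \<ge> 1"
  shows "(1 - x^N) * (1 - y^N) = (\<Sum>k<N. of_nat N / of_nat (N - k) * ((1-x)*(1-y))^(N - k) *
      (\<Sum>a=0..k. of_nat ((N - 1 - k + a) choose a) * x^a * (of_nat ((N - 1 - a) choose (k - a)) * y^(k - a))))"
proof -
  have "(1 - x^N) * (1 - y^N) = (\<Sum>p<N. of_nat N / of_nat (Suc p) * ((1-x)*(1-y))^(Suc p) *
      (\<Sum>a=0..N - Suc p. of_nat ((p + a) choose a) * x^a * (of_nat ((p + (N - Suc p - a)) choose (N - Suc p - a)) * y^(N - Suc p - a))))"
    by (rule lemmaC_fps[OF N])
  also have "\<dots> = (\<Sum>k<N. of_nat N / of_nat (Suc (N - Suc k)) * ((1-x)*(1-y))^(Suc (N - Suc k)) *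
      (\<Sum>a=0..N - Suc (N - Suc k). of_nat ((N - Suc k + a) choose a) * x^a * (of_nat ((N - Suc k + (N - Suc (N - Suc k) - a)) choose (N - Suc (N - Suc k) - a)) * y^(N - Suc (N - Suc k) - a))))"
    by (rule sum.nat_diff_reindex[symmetric])
  also have "\<dots> = (\<Sum>k<N. of_nat N / of_nat (N - k) * ((1-x)*(1-y))^(N - k) *
      (\<Sum>a=0..k. of_nat ((N - 1 - k + a) choose a) * x^a * (of_nat ((N - 1 - a) choose (k - a)) * y^(k - a))))"
  proof (rule sum.cong[OF refl])
    fix k assume k: "k \<in> {..<N}"
    then obtain j where j: "N = Suc (k + j)" by (metis lessThan_iff less_imp_Suc_add)
    have "\<And>a. a \<in> {0..k} \<Longrightarrow> j + (k - a) = k + j - a" by auto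
    thus "of_nat N / of_nat (Suc (N - Suc k)) * ((1-x)*(1-y))^(Suc (N - Suc k)) *
      (\<Sum>a=0..N - Suc (N - Suc k). of_nat ((N - Suc k + a) choose a) * x^a * (of_nat ((N - Suc k + (N - Suc (N - Suc k) - a)) choose (N - Suc (N - Suc k) - a)) * y^(N - Suc (N - Suc k) - a))) =
      of_nat N / of_nat (N - k) * ((1-x)*(1-y))^(N - k) *
      (\<Sum>a=0..k. of_nat ((N - 1 - k + a) choose a) * x^a * (of_nat ((N - 1 - a) choose (k - a)) * y^(k - a)))"
      unfolding j by (intro arg_cong2[where f="(*)"] refl sum.cong) (auto simp del: of_nat_Suc)
  qed
  finally show ?thesis .
qed

definition bc :: "'a::field_char_0 \<Rightarrow> nat \<Rightarrow> nat \<Rightarrow> 'a" where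
  "bc q N k = (\<Sum>a=0..k. of_nat ((N - 1 - k + a) choose a) * of_nat ((N - 1 - a) choose (k - a)) * q^(k - a))"

lemma inst1:
  fixes u q :: "'a::field_char_0"
  assumes N: "N \<ge> 1"
  shows "(1 - u^N) * (1 - (q*u)^N) = (\<Sum>k<N. of_nat N / of_nat (N - k) * bc q N k * u^k * ((1-u)*(1-q*u))^(N-k))"
  unfolding lemmaC[OF N, of u "q*u"]
proof (rule sum.cong[OF refl])
  fix k assume "k \<in> {..<N}"
  have "(\<Sum>a=0..k. of_nat ((N - 1 - k + a) choose a) * u^a * (of_nat ((N - 1 - a) choose (k - a)) * (q*u)^(k - a)))
      = (\<Sum>a=0..k. u^k * (of_nat ((N - 1 - k + a) choose a) * of_nat ((N - 1 - a) choose (k - a)) * q^(k - a)))"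
  proof (rule sum.cong[OF refl])
    fix a assume "a \<in> {0..k}"
    hence "u^a * u^(k-a) = u^k" by (simp flip: power_add)
    thus "of_nat ((N - 1 - k + a) choose a) * u^a * (of_nat ((N - 1 - a) choose (k - a)) * (q*u)^(k - a))
      = u^k * (of_nat ((N - 1 - k + a) choose a) * of_nat ((N - 1 - a) choose (k - a)) * q^(k - a))"
      by (simp add: power_mult_distrib)
  qed
  also have "\<dots> = u^k * bc q N k" by (simp add: bc_def sum_distrib_left)
  finally show "of_nat N / of_nat (N - k) * ((1-u)*(1-q*u))^(N - k) *
      (\<Sum>a=0..k. of_nat ((N - 1 - k + a) choose a) * u^a * (of_nat ((N - 1 - a) choose (k - a)) * (q*u)^(k - a)))
      = of_nat N / of_nat (N - k) * bc q N k * u^k * ((1-u)*(1-q*u))^(N-k)" by simp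
qed

lemma inst2:
  fixes u q :: "'a::field_char_0"
  assumes N: "N \<ge> 1" and q: "q \<noteq> 0"
  shows "(1 - u^N) * (q^N - u^N) = (\<Sum>k<N. of_nat N / of_nat (N - k) * bc q N k * u^k * ((1-u)*(q-u))^(N-k))"
proof -
  have "(1 - u^N) * (q^N - u^N) = q^N * ((1 - (u/q)^N) * (1 - u^N))"
    using q by (simp add: field_simps power_divide)
  also have "\<dots> = (\<Sum>k<N. q^N * (of_nat N / of_nat (N - k) * ((1-u/q)*(1-u))^(N - k) *
      (\<Sum>a=0..k. of_nat ((N - 1 - k + a) choose a) * (u/q)^a * (of_nat ((N - 1 - a) choose (k - a)) * u^(k - a)))))"
    unfolding lemmaC[OF N, of "u/q" u] by (simp add: sum_distrib_left)
  also have "\<dots> = (\<Sum>k<N. of_nat N / of_nat (N - k) * bc q N k * u^k * ((1-u)*(q-u))^(N-k))"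
  proof (rule sum.cong[OF refl])
    fix k assume k: "k \<in> {..<N}"
    have qN: "q^N = q^(N-k) * q^k" using k by (simp flip: power_add)
    have "q*((1-u/q)*(1-u)) = (1-u)*(q-u)" using q by (simp add: field_simps)
    hence A: "q^(N-k) * ((1-u/q)*(1-u))^(N - k) = ((1-u)*(q-u))^(N-k)"
      by (metis power_mult_distrib)
    have "q^k * (\<Sum>a=0..k. of_nat ((N - 1 - k + a) choose a) * (u/q)^a * (of_nat ((N - 1 - a) choose (k - a)) * u^(k - a)))
      = (\<Sum>a=0..k. u^k * (of_nat ((N - 1 - k + a) choose a) * of_nat ((N - 1 - a) choose (k - a)) * q^(k - a)))"
      unfolding sum_distrib_left
    proof (rule sum.cong[OF refl])
      fix a assume "a \<in> {0..k}"
      hence e1: "u^a * u^(k-a) = u^k" and e2: "q^k = q^a * q^(k-a)" by (simp_all flip: power_add)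
      have e3: "q^k * (u/q)^a = u^a * q^(k-a)" using q unfolding e2 by (simp add: power_divide)
      have "q^k * (of_nat ((N - 1 - k + a) choose a) * (u/q)^a * (of_nat ((N - 1 - a) choose (k - a)) * u^(k - a)))
        = (of_nat ((N - 1 - k + a) choose a) * of_nat ((N - 1 - a) choose (k - a))) * (q^k * (u/q)^a) * u^(k - a)"
        by (simp only: ac_simps)
      also have "\<dots> = u^k * (of_nat ((N - 1 - k + a) choose a) * of_nat ((N - 1 - a) choose (k - a)) * q^(k - a))"
        unfolding e3 e1[symmetric] by (simp only: ac_simps)
      finally show "q^k * (of_nat ((N - 1 - k + a) choose a) * (u/q)^a * (of_nat ((N - 1 - a) choose (k - a)) * u^(k - a)))
       = u^k * (of_nat ((N - 1 - k + a) choose a) * of_nat ((N - 1 - a) choose (k - a)) * q^(k - a))" .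
    qed
    also have "\<dots> = u^k * bc q N k" by (simp add: bc_def sum_distrib_left)
    finally have B: "q^k * (\<Sum>a=0..k. of_nat ((N - 1 - k + a) choose a) * (u/q)^a * (of_nat ((N - 1 - a) choose (k - a)) * u^(k - a))) = u^k * bc q N k" .
    show "q^N * (of_nat N / of_nat (N - k) * ((1-u/q)*(1-u))^(N - k) *
      (\<Sum>a=0..k. of_nat ((N - 1 - k + a) choose a) * (u/q)^a * (of_nat ((N - 1 - a) choose (k - a)) * u^(k - a))))
      = of_nat N / of_nat (N - k) * bc q N k * u^k * ((1-u)*(q-u))^(N-k)"
    proof -
      have "q^N * (of_nat N / of_nat (N - k) * ((1-u/q)*(1-u))^(N - k) *
        (\<Sum>a=0..k. of_nat ((N - 1 - k + a) choose a) * (u/q)^a * (of_nat ((N - 1 - a) choose (k - a)) * u^(k - a))))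
        = of_nat N / of_nat (N - k) * (q^(N-k) * ((1-u/q)*(1-u))^(N - k)) * (q^k *
        (\<Sum>a=0..k. of_nat ((N - 1 - k + a) choose a) * (u/q)^a * (of_nat ((N - 1 - a) choose (k - a)) * u^(k - a))))"
        unfolding qN by (simp only: ac_simps)
      also have "\<dots> = of_nat N / of_nat (N - k) * ((1-u)*(q-u))^(N-k) * (u^k * bc q N k)"
        by (simp only: A B)
      finally show ?thesis by (simp only: ac_simps)
    qed
  qed
  finally show ?thesis .
qed

lemma Dversion:
  fixes u q :: "'a::field_char_0"
  assumes N: "N \<ge> 1" and q: "q \<noteq> 0"
  shows "(\<Sum>k<N. of_nat N / of_nat (N - k) * bc q N k * u^k * (((1-u)*(1-q*u))^(N-k) - ((1-u)*(q-u))^(N-k)))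
     = (1 - q^N) * (1 - u^(2*N))"
proof -
  have "(\<Sum>k<N. of_nat N / of_nat (N - k) * bc q N k * u^k * (((1-u)*(1-q*u))^(N-k) - ((1-u)*(q-u))^(N-k)))
    = (1 - u^N) * (1 - (q*u)^N) - (1 - u^N) * (q^N - u^N)"
    unfolding inst1[OF N] inst2[OF N q] by (simp add: algebra_simps sum_subtractf)
  also have "\<dots> = (1 - q^N) * (1 - u^(2*N))"
    by (simp add: algebra_simps power_mult_distrib power_mult mult_2 power_add power2_eq_square)
  finally show ?thesis .
qed



definition Bk :: "'a::field_char_0 \<Rightarrow> nat \<Rightarrow> nat \<Rightarrow> nat \<Rightarrow> 'a" where
  "Bk q m k l = of_nat (m + 1 - l) / of_nat (m + 1 - k) * bc q (m + 1 - l) (k - l)"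

definition Gt :: "'a::field_char_0 \<Rightarrow> nat \<Rightarrow> 'a \<Rightarrow> nat \<Rightarrow> 'a" where
  "Gt q m u k = u^k * (((1-u)*(1-q*u))^(m+1-k) - ((1-u)*(q-u))^(m+1-k))"

lemma star:
  fixes q u :: "'a::field_char_0"
  assumes l: "l \<le> m" and q: "q \<noteq> 0"
  shows "(\<Sum>k=l..m. Bk q m k l * Gt q m u k) = (1 - q^(m+1-l)) * (u^l - u^(2*m+2-l))"
proof -
  define N where "N = m + 1 - l"
  have N: "N \<ge> 1" using l by (simp add: N_def)
  have "(\<Sum>k=l..m. Bk q m k l * Gt q m u k) = (\<Sum>i=0..m-l. Bk q m (i+l) l * Gt q m u (i+l))"
    using sum.shift_bounds_cl_nat_ivl[of "\<lambda>k. Bk q m k l * Gt q m u k" 0 l "m-l"] l by simp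
  also have "\<dots> = (\<Sum>i<N. u^l * (of_nat N / of_nat (N - i) * bc q N i * u^i * (((1-u)*(1-q*u))^(N-i) - ((1-u)*(q-u))^(N-i))))"
  proof -
    have "{0..m-l} = {..<N}" using l by (auto simp: N_def)
    moreover have "\<And>i. i \<in> {..<N} \<Longrightarrow> Bk q m (i+l) l * Gt q m u (i+l) =
       u^l * (of_nat N / of_nat (N - i) * bc q N i * u^i * (((1-u)*(1-q*u))^(N-i) - ((1-u)*(q-u))^(N-i)))"
    proof -
      fix i assume i: "i \<in> {..<N}"
      have e: "m + 1 - (i + l) = N - i" using l i by (auto simp: N_def)
      show "Bk q m (i+l) l * Gt q m u (i+l) =
       u^l * (of_nat N / of_nat (N - i) * bc q N i * u^i * (((1-u)*(1-q*u))^(N-i) - ((1-u)*(q-u))^(N-i)))"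
        unfolding Bk_def Gt_def e N_def[symmetric] by (simp add: power_add ac_simps)
    qed
    ultimately show ?thesis by (intro sum.cong) auto
  qed
  also have "\<dots> = u^l * ((1 - q^N) * (1 - u^(2*N)))"
    by (simp only: sum_distrib_left[symmetric] Dversion[OF N q])
  also have "\<dots> = (1 - q^(m+1-l)) * (u^l - u^(2*m+2-l))"
  proof -
    have "2*m+2-l = l + 2*N" using l by (simp add: N_def)
    hence "u^(2*m+2-l) = u^l * u^(2*N)" by (simp only: power_add)
    thus ?thesis unfolding N_def[symmetric] by (simp add: algebra_simps)
  qed
  finally show ?thesis .
qed

definition ap :: "nat \<Rightarrow> nat \<Rightarrow> 'a::field_char_0" where
  "ap m l = (-1)^l * (of_nat (2*m choose l) - (if 2 \<le> l then of_nat (2*m choose (l-2)) else 0))"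

lemma split_sym:
  fixes f :: "nat \<Rightarrow> 'a::field_char_0"
  assumes sym: "\<And>l. l \<le> m \<Longrightarrow> f (2*m+2-l) = - f l" and mid: "f (m+1) = 0"
  shows "(\<Sum>i=0..2*m+2. f i * u^i) = (\<Sum>l=0..m. f l * (u^l - u^(2*m+2-l)))"
proof -
  have sp: "{0..2*m+2} = {0..m} \<union> {m+1} \<union> {m+2..2*m+2}" by auto
  have "(\<Sum>i=0..2*m+2. f i * u^i) = (\<Sum>i=0..m. f i * u^i) + f (m+1) * u^(m+1) + (\<Sum>i=m+2..2*m+2. f i * u^i)"
    unfolding sp by (subst sum.union_disjoint, auto)+
  also have "(\<Sum>i=m+2..2*m+2. f i * u^i) = (\<Sum>l=0..m. f (2*m+2-l) * u^(2*m+2-l))"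
    by (rule sum.reindex_bij_witness[where i="\<lambda>l. 2*m+2-l" and j="\<lambda>i. 2*m+2-i"]) auto
  also have "\<dots> = (\<Sum>l=0..m. - f l * u^(2*m+2-l))"
  proof (rule sum.cong[OF refl])
    fix l assume "l \<in> {0..m}"
    hence "f (2*m+2-l) = - f l" by (intro sym) auto
    thus "f (2*m+2-l) * u^(2*m+2-l) = - f l * u^(2*m+2-l)" by simp
  qed
  finally have 1: "(\<Sum>i=0..2*m+2. f i * u^i) = (\<Sum>i=0..m. f i * u^i) + f (m+1) * u^(m+1) + (\<Sum>l=0..m. - f l * u^(2*m+2-l))" .
  have 2: "(\<Sum>l=0..m. f l * (u^l - u^(2*m+2-l))) = (\<Sum>l=0..m. f l*u^l) + (\<Sum>l=0..m. - f l * u^(2*m+2-l))"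
    unfolding sum.distrib[symmetric] by (rule sum.cong) (simp_all add: algebra_simps)
  show ?thesis unfolding 1 2 mid by simp
qed

lemma ap_sym: "l \<le> m \<Longrightarrow> ap m (2*m+2-l) = - (ap m l :: 'a::field_char_0)"
proof -
  assume l: "l \<le> m"
  have s1: "(-1::'a)^(2*m+2-l) = (-1)^l"
  proof -
    have "2*m+2-l = 2*(m+1-l) + l" using l by simp
    thus ?thesis by (simp add: power_add power_mult)
  qed
  have s2: "2*m choose (2*m+2-l-2) = 2*m choose l"
    using l binomial_symmetric[of l "2*m"] by (simp add: diff_diff_add)
  have s3: "of_nat (2*m choose (2*m+2-l)) = (if 2 \<le> l then of_nat (2*m choose (l-2)) else (0::'a))"
  proof (cases "2 \<le> l")
    case True
    hence "2*m choose (2*m+2-l) = 2*m choose (l-2)"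
      using l binomial_symmetric[of "l-2" "2*m"] by (simp add: numeral_2_eq_2)
    thus ?thesis using True by simp
  next
    case False thus ?thesis by simp
  qed
  show ?thesis unfolding ap_def s1 using l s2 s3 by (simp add: algebra_simps)
qed

lemma ap_mid: "ap m (m+1) = (0::'a::field_char_0)"
proof (cases m)
  case 0 thus ?thesis by (simp add: ap_def)
next
  case (Suc k)
  have "2*m choose (m+1) = 2*m choose (m+1-2)"
    using binomial_symmetric[of "m+1" "2*m"] Suc by simp
  thus ?thesis using Suc by (simp add: ap_def)
qed

lemma ap_poly: "(\<Sum>i=0..2*m+2. ap m i * u^i) = (1-u^2)*(1-u)^(2*m :: nat)"
proof -
  define g :: "nat \<Rightarrow> 'a" where "g i = (-1)^i * of_nat (2*m choose i)" for i
  have apg: "ap m i = g i - (if 2 \<le> i then g (i-2) else 0)" for i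
    unfolding ap_def g_def by (auto simp: algebra_simps power_diff)
  have bin: "(1-u)^(2*m) = (\<Sum>i=0..2*m. g i * u^i)"
  proof -
    have "(1-u)^(2*m) = (-u + 1)^(2*m)" by simp
    also have "\<dots> = (\<Sum>k\<le>2*m. of_nat (2*m choose k) * (-u)^k * 1^(2*m-k))" by (rule binomial_ring)
    also have "\<dots> = (\<Sum>i=0..2*m. g i * u^i)"
      unfolding atLeast0AtMost g_def by (rule sum.cong[OF refl]) (simp only: power_minus[of u] power_one mult_1_right mult_1_left ac_simps)
    finally show ?thesis .
  qed
  have A: "(\<Sum>i=0..2*m+2. g i * u^i) = (\<Sum>i=0..2*m. g i * u^i)"
  proof -
    have "(\<Sum>i=0..2*m+2. g i * u^i) = (\<Sum>i=0..2*m. g i * u^i) + g (2*m+1) * u^(2*m+1) + g (2*m+2) * u^(2*m+2)"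
      by (simp only: add_2_eq_Suc' sum.atLeast0_atMost_Suc add.assoc) simp
    moreover have "g (2*m+1) = 0" "g (2*m+2) = 0" by (simp_all add: g_def)
    ultimately show ?thesis by simp
  qed
  have B: "(\<Sum>i=0..2*m+2. (if 2 \<le> i then g (i-2) else 0) * u^i) = u^2 * (\<Sum>i=0..2*m. g i * u^i)"
  proof -
    have "(\<Sum>i=0..2*m+2. (if 2 \<le> i then g (i-2) else 0) * u^i) = (\<Sum>i=0..Suc (Suc (2*m)). (if 2 \<le> i then g (i-2) else 0) * u^i)"
      by (simp only: add_2_eq_Suc')
    also have "\<dots> = (\<Sum>i=0..2*m. g i * u^(Suc (Suc i)))"
      by (simp only: sum.atLeast0_atMost_Suc_shift) simp
    also have "\<dots> = u^2 * (\<Sum>i=0..2*m. g i * u^i)"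
      unfolding sum_distrib_left by (rule sum.cong[OF refl]) (simp only: power_Suc power2_eq_square ac_simps)
    finally show ?thesis .
  qed
  have "(\<Sum>i=0..2*m+2. ap m i * u^i) = (\<Sum>i=0..2*m+2. g i * u^i) - (\<Sum>i=0..2*m+2. (if 2 \<le> i then g (i-2) else 0) * u^i)"
    unfolding apg sum_subtractf[symmetric] by (rule sum.cong[OF refl]) (simp only: left_diff_distrib)
  also have "\<dots> = (1-u^2)*(1-u)^(2*m)" unfolding A B bin by (simp only: left_diff_distrib mult_1_left)
  finally show ?thesis .
qed

lemma binom_anti: "(\<Sum>l=0..m. ap m l * (u^l - u^(2*m+2-l))) = (1-u^2)*(1-u)^(2*m :: nat)"
proof -
  have 1: "(\<Sum>i=0..2*m+2. ap m i * u^i) = (\<Sum>l=0..m. ap m l * (u^l - u^(2*m+2-l)))"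
    by (rule split_sym[OF ap_sym ap_mid])
  show ?thesis by (simp only: 1[symmetric] ap_poly)
qed

lemma tri_swap: "(\<Sum>k=0..(m::nat). \<Sum>l=0..k. f k l) = (\<Sum>l=0..m. \<Sum>k=l..m. (f k l :: 'a::comm_monoid_add))"
proof (induction m)
  case 0 show ?case by simp
next
  case (Suc m)
  have "(\<Sum>l=0..Suc m. \<Sum>k=l..Suc m. f k l) = (\<Sum>l=0..m. \<Sum>k=l..Suc m. f k l) + f (Suc m) (Suc m)"
    by simp
  also have "(\<Sum>l=0..m. \<Sum>k=l..Suc m. f k l) = (\<Sum>l=0..m. (\<Sum>k=l..m. f k l) + f (Suc m) l)"
    by (rule sum.cong[OF refl]) simp
  also have "\<dots> = (\<Sum>l=0..m. \<Sum>k=l..m. f k l) + (\<Sum>l=0..m. f (Suc m) l)" by (simp add: sum.distrib)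
  finally show ?case using Suc.IH by (simp add: add_ac)
qed

definition ecoef :: "'a::field_char_0 \<Rightarrow> nat \<Rightarrow> nat \<Rightarrow> 'a" where
  "ecoef q m k = (\<Sum>l=0..k. ap m l / (1 - q^(m+1-l)) * Bk q m k l)"

lemma main_u:
  fixes q u :: "'a::field_char_0"
  assumes q: "q \<noteq> 0" and qj: "\<And>j. j \<ge> 1 \<Longrightarrow> q^j \<noteq> 1"
  shows "(\<Sum>k=0..m. ecoef q m k * Gt q m u k) = (1-u^2)*(1-u)^(2*m)"
proof -
  have "(\<Sum>k=0..m. ecoef q m k * Gt q m u k) = (\<Sum>k=0..m. \<Sum>l=0..k. ap m l / (1 - q^(m+1-l)) * (Bk q m k l * Gt q m u k))"
    by (simp add: ecoef_def sum_distrib_right mult.assoc)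
  also have "\<dots> = (\<Sum>l=0..m. \<Sum>k=l..m. ap m l / (1 - q^(m+1-l)) * (Bk q m k l * Gt q m u k))"
    by (rule tri_swap)
  also have "\<dots> = (\<Sum>l=0..m. ap m l * (u^l - u^(2*m+2-l)))"
  proof (rule sum.cong[OF refl])
    fix l assume l: "l \<in> {0..m}"
    have "1 - q^(m+1-l) \<noteq> 0" using qj[of "m+1-l"] l by auto
    have "(\<Sum>k=l..m. ap m l / (1 - q^(m+1-l)) * (Bk q m k l * Gt q m u k))
       = ap m l / (1 - q^(m+1-l)) * (\<Sum>k=l..m. Bk q m k l * Gt q m u k)"
      by (simp only: sum_distrib_left)
    also have "\<dots> = ap m l / (1 - q^(m+1-l)) * ((1 - q^(m+1-l)) * (u^l - u^(2*m+2-l)))"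
    proof -
      have "l \<le> m" using l by simp
      thus ?thesis by (simp only: star[OF _ q])
    qed
    also have "\<dots> = ap m l * (u^l - u^(2*m+2-l))"
      using \<open>1 - q^(m+1-l) \<noteq> 0\<close> by simp
    finally show "(\<Sum>k=l..m. ap m l / (1 - q^(m+1-l)) * (Bk q m k l * Gt q m u k)) = ap m l * (u^l - u^(2*m+2-l))" .
  qed
  also have "\<dots> = (1-u^2)*(1-u)^(2*m)" by (rule binom_anti)
  finally show ?thesis .
qed



instance fract :: ("{idom,ring_char_0}") ring_char_0
proof
  show "inj (of_nat :: nat \<Rightarrow> 'a fract)"
  proof (rule injI)
    fix a b :: nat assume "(of_nat a :: 'a fract) = of_nat b"
    moreover have "\<And>n. (of_nat n :: 'a fract) = Fract (of_nat n) 1"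
      by (induct_tac n) (simp_all add: One_fract_def Zero_fract_def)
    ultimately show "a = b" by (simp add: eq_fract)
  qed
qed

instance fract :: ("{idom,ring_char_0}") field_char_0 ..

lemma to_fract_pow: "to_fract (x ^ n) = to_fract x ^ n"
  by (induct n) simp_all

lemma qq_pow: "qq ^ j = to_fract (monom 1 (2*j))"
  by (simp add: qq_def qh_def power_mult[symmetric] monom_altdef to_fract_pow)

lemma qq_nz: "qq \<noteq> 0" by (simp add: qq_def qh_def)

lemma qq_pow_ne1: "j \<ge> 1 \<Longrightarrow> qq ^ j \<noteq> 1"
proof
  assume j: "j \<ge> 1" and "qq ^ j = 1"
  hence "to_fract (monom (1::int) (2*j)) = to_fract 1" by (simp add: qq_pow)
  hence "monom (1::int) (2*j) = 1" by (simp only: to_fract_eq_iff)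
  hence "degree (monom (1::int) (2*j)) = 0" by simp
  with j show False by (simp add: degree_monom_eq)
qed

lemma ibinom_nat: "ibinom (int a) (int b) = int (a choose b)"
  by (simp add: ibinom_def)

lemma A_ap:
  assumes "l \<le> k"
  shows "(-1)^k * (-1)^(k-l) * of_int (ibinom (2 * int m) (int l) - ibinom (2 * int m) (int l - 2)) = (ap m l :: rf)"
proof -
  have s: "(-1::rf)^k * (-1)^(k-l) = (-1)^l"
  proof -
    have "k + (k - l) = 2*(k-l) + l" using assms by simp
    hence "(-1::rf)^k * (-1)^(k-l) = (-1)^(2*(k-l) + l)" by (simp only: power_add[symmetric])
    also have "\<dots> = (-1)^l" by (simp only: power_add power_mult) simp
    finally show ?thesis .
  qed
  have b1: "ibinom (2 * int m) (int l) = int (2*m choose l)"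
    using ibinom_nat[of "2*m" l] by simp
  have b2: "ibinom (2 * int m) (int l - 2) = (if 2 \<le> l then int (2*m choose (l-2)) else 0)"
  proof (cases "2 \<le> l")
    case True
    hence "int l - 2 = int (l - 2)" by simp
    thus ?thesis using True ibinom_nat[of "2*m" "l-2"] by simp
  next
    case False thus ?thesis by (simp add: ibinom_def)
  qed
  show ?thesis unfolding s b1 b2 ap_def by simp
qed

lemma inner_Bk:
  assumes lk: "l \<le> k" and km: "k \<le> m"
  shows "(\<Sum>i=0..k-l. of_int (int m - int l + 1) / of_int (int m - int k + 1)
             * of_int (ibinom (int m - int k + int i) (int i))
             * of_int (ibinom (int m - int l - int i) (int k - int l - int i))
             * qq ^ (k - l - i)) = Bk qq m k l"
proof -
  have "(\<Sum>i=0..k-l. of_int (int m - int l + 1) / of_int (int m - int k + 1)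
             * of_int (ibinom (int m - int k + int i) (int i))
             * of_int (ibinom (int m - int l - int i) (int k - int l - int i))
             * qq ^ (k - l - i)) = (\<Sum>i=0..k-l. of_nat (m + 1 - l) / of_nat (m + 1 - k) *
             (of_nat ((m + 1 - l - 1 - (k - l) + i) choose i) * of_nat ((m + 1 - l - 1 - i) choose (k - l - i)) * qq^(k - l - i)))"
  proof (rule sum.cong[OF refl])
    fix i assume i: "i \<in> {0..k-l}"
    have e1: "int m - int l + 1 = int (m + 1 - l)" "int m - int k + 1 = int (m + 1 - k)" using lk km by auto
    have e2: "int m - int k + int i = int (m + 1 - l - 1 - (k - l) + i)" using lk km i by auto
    have e3: "int m - int l - int i = int (m + 1 - l - 1 - i)" "int k - int l - int i = int (k - l - i)"
      using lk km i by auto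
    show "of_int (int m - int l + 1) / of_int (int m - int k + 1)
             * of_int (ibinom (int m - int k + int i) (int i))
             * of_int (ibinom (int m - int l - int i) (int k - int l - int i))
             * qq ^ (k - l - i) = of_nat (m + 1 - l) / of_nat (m + 1 - k) *
             (of_nat ((m + 1 - l - 1 - (k - l) + i) choose i) * of_nat ((m + 1 - l - 1 - i) choose (k - l - i)) * qq^(k - l - i))"
      unfolding e1 e2 e3 ibinom_nat by simp
  qed
  also have "\<dots> = Bk qq m k l" unfolding Bk_def bc_def by (simp add: sum_distrib_left)
  finally show ?thesis .
qed

lemma Pk_ecoef:
  assumes km: "k \<le> m"
  shows "(-1)^k * P m k = (\<Prod>j=0..k. 1 - qq ^ (m + 1 - j)) / (1 - qq) ^ (3*k) * ecoef qq m k"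
proof -
  have "(-1)^k * P m k = (\<Prod>j=0..k. 1 - qq ^ (m + 1 - j)) / (1 - qq) ^ (3*k) *
     (\<Sum>l=0..k. (-1)^k * ((-1) ^ (k - l) / (1 - qq ^ (m + 1 - l))
        * of_int (ibinom (2 * int m) (int l) - ibinom (2 * int m) (int l - 2))
        * (\<Sum>i=0..k-l. of_int (int m - int l + 1) / of_int (int m - int k + 1)
             * of_int (ibinom (int m - int k + int i) (int i))
             * of_int (ibinom (int m - int l - int i) (int k - int l - int i))
             * qq ^ (k - l - i))))"
    unfolding P_def by (simp add: sum_distrib_left ac_simps)
  also have "(\<Sum>l=0..k. (-1)^k * ((-1) ^ (k - l) / (1 - qq ^ (m + 1 - l))
        * of_int (ibinom (2 * int m) (int l) - ibinom (2 * int m) (int l - 2))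
        * (\<Sum>i=0..k-l. of_int (int m - int l + 1) / of_int (int m - int k + 1)
             * of_int (ibinom (int m - int k + int i) (int i))
             * of_int (ibinom (int m - int l - int i) (int k - int l - int i))
             * qq ^ (k - l - i)))) = ecoef qq m k"
    unfolding ecoef_def
  proof (rule sum.cong[OF refl])
    fix l assume l: "l \<in> {0..k}"
    hence lk: "l \<le> k" by simp
    show "(-1)^k * ((-1) ^ (k - l) / (1 - qq ^ (m + 1 - l))
        * of_int (ibinom (2 * int m) (int l) - ibinom (2 * int m) (int l - 2))
        * (\<Sum>i=0..k-l. of_int (int m - int l + 1) / of_int (int m - int k + 1)
             * of_int (ibinom (int m - int k + int i) (int i))
             * of_int (ibinom (int m - int l - int i) (int k - int l - int i))
             * qq ^ (k - l - i))) = ap m l / (1 - qq^(m+1-l)) * Bk qq m k l"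
      unfolding inner_Bk[OF lk km] A_ap[OF lk, symmetric] by (simp add: field_simps)
  qed
  finally show ?thesis .
qed

lemma eps_nz: "1 - qq \<noteq> 0" using qq_pow_ne1[of 1] by auto
lemma qqj_nz: "j \<ge> 1 \<Longrightarrow> 1 - qq^j \<noteq> 0" using qq_pow_ne1[of j] by auto

lemma prod_nz: "k \<le> m \<Longrightarrow> (\<Prod>i=0..k. 1 - qq ^ (m + 1 - i)) \<noteq> 0"
proof -
  assume km: "k \<le> m"
  have "\<And>i. i \<in> {0..k} \<Longrightarrow> 1 - qq^(m+1-i) \<noteq> 0" by (rule qqj_nz) (use km in auto)
  thus ?thesis by (simp add: prod_zero_iff)
qed

lemma coef:
  assumes km: "k \<le> m"
  shows "(-1)^k * P m k / ((1-qq^2) * (1-qq) powi (2*int m - 3*int k) * (\<Prod>i=0..k. 1 - qq ^ (m + 1 - i)))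
     = ecoef qq m k / ((1-qq)^(2*m) * (1-qq^2))"
proof -
  have pw: "(1-qq) powi (2*int m - 3*int k) * (1-qq)^(3*k) = (1-qq)^(2*m)"
  proof -
    have "(1-qq) powi (2*int m - 3*int k) * (1-qq) powi (int (3*k)) = (1-qq) powi ((2*int m - 3*int k) + int (3*k))"
      by (subst power_int_add) (use eps_nz in auto)
    also have "(2*int m - 3*int k) + int (3*k) = int (2*m)" by simp
    finally show ?thesis by (simp only: power_int_of_nat)
  qed
  have q2: "1 - qq^2 \<noteq> 0" by (rule qqj_nz) simp
  show ?thesis
    unfolding Pk_ecoef[OF km] using prod_nz[OF km] eps_nz q2 pw[symmetric]
    by (simp add: field_simps)
qed

definition fS :: "nat \<Rightarrow> nat \<Rightarrow> rf" where
  "fS m k = (1 - qq ^ (2*k)) / (1 - qq ^ 2) * ((1 - qq ^ k) / (1 - qq)) ^ (2*m)"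

definition RR :: "nat \<Rightarrow> nat \<Rightarrow> rf" where
  "RR m n = (\<Sum>k=0..m. ecoef qq m k / ((1-qq)^(2*m) * (1-qq^2)) *
      ((1 - qq ^ n) ^ (m + 1 - k) * (1 - qq ^ (n + 1)) ^ (m + 1 - k) * qq ^ (k * n)))"

lemma S_rec: "S (2*m+1) (Suc n) = qq^(m+1) * S (2*m+1) n + fS m (Suc n)"
proof -
  have qh: "qh ^ ((2*m+1+1) * j) = qq ^ ((m+1)*j)" for j
    by (simp add: qq_def power_mult[symmetric] ac_simps)
  have "S (2*m+1) (Suc n) = (\<Sum>k=1..Suc n. fS m k * qq ^ ((m+1) * (Suc n - k)))"
    unfolding S_def fS_def qh by simp
  also have "\<dots> = (\<Sum>k=1..n. fS m k * qq ^ ((m+1) * (Suc n - k))) + fS m (Suc n)"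
    by simp
  also have "(\<Sum>k=1..n. fS m k * qq ^ ((m+1) * (Suc n - k))) = qq^(m+1) * (\<Sum>k=1..n. fS m k * qq ^ ((m+1) * (n - k)))"
    unfolding sum_distrib_left
  proof (rule sum.cong[OF refl])
    fix k assume "k \<in> {1..n}"
    hence "(m+1) * (Suc n - k) = (m+1) + (m+1) * (n - k)" by (simp add: Suc_diff_le)
    thus "fS m k * qq ^ ((m+1) * (Suc n - k)) = qq^(m+1) * (fS m k * qq ^ ((m+1) * (n - k)))"
      by (simp add: power_add)
  qed
  also have "(\<Sum>k=1..n. fS m k * qq ^ ((m+1) * (n - k))) = S (2*m+1) n"
    unfolding S_def fS_def qh by simp
  finally show ?thesis .
qed

lemma RR_rec: "RR m (Suc n) = qq^(m+1) * RR m n + fS m (Suc n)"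
proof -
  define u where "u = qq ^ (Suc n)"
  define c where "c k = ecoef qq m k / ((1-qq)^(2*m) * (1-qq^2))" for k
  have trm: "(1 - qq ^ Suc n) ^ (m + 1 - k) * (1 - qq ^ (Suc n + 1)) ^ (m + 1 - k) * qq ^ (k * Suc n)
     - qq^(m+1) * ((1 - qq ^ n) ^ (m + 1 - k) * (1 - qq ^ (n + 1)) ^ (m + 1 - k) * qq ^ (k * n)) = Gt qq m u k"
    if k: "k \<le> m" for k
  proof -
    have a1: "qq ^ (Suc n + 1) = qq * u" by (simp add: u_def)
    have a2: "qq ^ (k * Suc n) = u^k" by (simp only: u_def mult.commute[of k] power_mult)
    have a3: "qq^(m+1) = qq^(m+1-k) * qq^k" using k by (simp flip: power_add)
    have a4: "qq^k * qq^(k*n) = u^k"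
    proof -
      have "qq^k * qq^(k*n) = qq^(Suc n * k)" by (simp add: power_add[symmetric] ac_simps)
      thus ?thesis by (simp only: u_def power_mult)
    qed
    have a5: "qq * (1 - qq^n) = qq - u" by (simp add: u_def algebra_simps)
    have "qq^(m+1) * ((1 - qq ^ n) ^ (m + 1 - k) * (1 - qq ^ (n + 1)) ^ (m + 1 - k) * qq ^ (k * n))
       = (qq * (1 - qq^n)) ^ (m + 1 - k) * (1 - u) ^ (m + 1 - k) * (qq^k * qq^(k*n))"
      unfolding a3 by (simp add: u_def power_mult_distrib ac_simps)
    also have "\<dots> = ((1-u)*(qq-u))^(m+1-k) * u^k"
      unfolding a4 a5 by (simp add: power_mult_distrib ac_simps)
    finally have Y: "qq^(m+1) * ((1 - qq ^ n) ^ (m + 1 - k) * (1 - qq ^ (n + 1)) ^ (m + 1 - k) * qq ^ (k * n))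
       = ((1-u)*(qq-u))^(m+1-k) * u^k" .
    have X: "(1 - qq ^ Suc n) ^ (m + 1 - k) * (1 - qq ^ (Suc n + 1)) ^ (m + 1 - k) * qq ^ (k * Suc n)
       = ((1-u)*(1-qq*u))^(m+1-k) * u^k"
      unfolding a1 a2 u_def[symmetric] by (simp only: power_mult_distrib)
    show ?thesis unfolding X Y Gt_def by (simp only: right_diff_distrib mult.commute)
  qed
  have "RR m (Suc n) - qq^(m+1) * RR m n = (\<Sum>k=0..m. c k * Gt qq m u k)"
    unfolding RR_def c_def[symmetric] sum_distrib_left sum_subtractf[symmetric]
    by (rule sum.cong[OF refl]) (simp add: trm[symmetric] algebra_simps)
  also have "\<dots> = (\<Sum>k=0..m. ecoef qq m k * Gt qq m u k) / ((1-qq)^(2*m) * (1-qq^2))"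
    by (simp add: c_def sum_divide_distrib)
  also have "\<dots> = (1-u^2)*(1-u)^(2*m) / ((1-qq)^(2*m) * (1-qq^2))"
    using main_u[OF qq_nz qq_pow_ne1] by simp
  also have "\<dots> = fS m (Suc n)"
  proof -
    have u2: "qq^(2*Suc n) = u^2" by (simp only: u_def mult.commute[of 2] power_mult)
    show ?thesis unfolding fS_def u2 u_def[symmetric] by (simp add: power_divide)
  qed
  finally show ?thesis by (simp add: algebra_simps)
qed

lemma S_RR: "S (2*m+1) n = RR m n"
proof (induction n)
  case 0
  have "RR m 0 = 0" unfolding RR_def by (rule sum.neutral) auto
  thus ?case by (simp add: S_def)
next
  case (Suc n) thus ?case by (simp only: S_rec RR_rec)
qed



definition Rq :: "rf set" where "Rq = range poly_in_q"

lemma piq_add: "poly_in_q (x + y) = poly_in_q x + poly_in_q y" by (simp add: poly_in_q_def pcompose_add)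
lemma piq_diff: "poly_in_q (x - y) = poly_in_q x - poly_in_q y" by (simp add: poly_in_q_def pcompose_diff)
lemma piq_mult: "poly_in_q (x * y) = poly_in_q x * poly_in_q y" by (simp add: poly_in_q_def pcompose_mult)
lemma piq_uminus: "poly_in_q (- x) = - poly_in_q x" by (simp add: poly_in_q_def pcompose_uminus)
lemma piq_0: "poly_in_q 0 = 0" by (simp add: poly_in_q_def)
lemma piq_1: "poly_in_q 1 = 1" by (simp add: poly_in_q_def pcompose_1)
lemma piq_X: "poly_in_q [:0,1:] = qq"
proof -
  have 1: "[:0,1:] \<circ>\<^sub>p [:0,0,1:] = ([:0,0,1:] :: int poly)" by (simp add: pcompose_pCons)
  have 2: "to_fract ([:0,1:] :: int poly) ^ 2 = to_fract [:0,0,1:]" by (simp add: power2_eq_square flip: to_fract_mult)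
  show ?thesis unfolding poly_in_q_def 1 qq_def qh_def 2 ..
qed

lemma Rq_0: "0 \<in> Rq" unfolding Rq_def using piq_0[symmetric] by (rule range_eqI)
lemma Rq_1: "1 \<in> Rq" unfolding Rq_def using piq_1[symmetric] by (rule range_eqI)
lemma Rq_add: assumes "a \<in> Rq" "b \<in> Rq" shows "a + b \<in> Rq"
proof -
  from assms obtain x y where "a = poly_in_q x" "b = poly_in_q y" unfolding Rq_def by auto
  hence "a + b = poly_in_q (x + y)" by (simp add: piq_add)
  thus ?thesis unfolding Rq_def by (rule range_eqI)
qed
lemma Rq_diff: assumes "a \<in> Rq" "b \<in> Rq" shows "a - b \<in> Rq"
proof -
  from assms obtain x y where "a = poly_in_q x" "b = poly_in_q y" unfolding Rq_def by auto
  hence "a - b = poly_in_q (x - y)" by (simp add: piq_diff)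
  thus ?thesis unfolding Rq_def by (rule range_eqI)
qed
lemma Rq_mult: assumes "a \<in> Rq" "b \<in> Rq" shows "a * b \<in> Rq"
proof -
  from assms obtain x y where "a = poly_in_q x" "b = poly_in_q y" unfolding Rq_def by auto
  hence "a * b = poly_in_q (x * y)" by (simp add: piq_mult)
  thus ?thesis unfolding Rq_def by (rule range_eqI)
qed
lemma Rq_uminus: assumes "a \<in> Rq" shows "- a \<in> Rq"
proof -
  from assms obtain x where "a = poly_in_q x" unfolding Rq_def by auto
  hence "- a = poly_in_q (- x)" by (simp add: piq_uminus)
  thus ?thesis unfolding Rq_def by (rule range_eqI)
qed
lemma Rq_qq: "qq \<in> Rq" unfolding Rq_def using piq_X[symmetric] by (rule range_eqI)
lemma Rq_pow: "a \<in> Rq \<Longrightarrow> a ^ n \<in> Rq"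
  by (induct n) (simp_all add: Rq_1 Rq_mult)
lemma Rq_sum: "(\<And>i. i \<in> A \<Longrightarrow> f i \<in> Rq) \<Longrightarrow> sum f A \<in> Rq"
  by (induct A rule: infinite_finite_induct) (auto simp: Rq_0 Rq_add)
lemma Rq_prod: "(\<And>i. i \<in> A \<Longrightarrow> f i \<in> Rq) \<Longrightarrow> prod f A \<in> Rq"
  by (induct A rule: infinite_finite_induct) (auto simp: Rq_1 Rq_mult)
lemma Rq_eps: "1 - qq \<in> Rq" by (simp add: Rq_1 Rq_qq Rq_diff)

definition Mq :: "nat \<Rightarrow> rf set" where "Mq r = {(1 - qq)^(2*r) * a | a. a \<in> Rq}"

lemma Mq_I: "a \<in> Rq \<Longrightarrow> z = (1 - qq)^(2*r) * a \<Longrightarrow> z \<in> Mq r" unfolding Mq_def by blast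
lemma Mq_E: "z \<in> Mq r \<Longrightarrow> (\<And>a. a \<in> Rq \<Longrightarrow> z = (1 - qq)^(2*r) * a \<Longrightarrow> Q) \<Longrightarrow> Q" unfolding Mq_def by blast
lemma Mq_0: "0 \<in> Mq r" by (rule Mq_I[OF Rq_0]) simp
lemma Mq_R: "a \<in> Rq \<Longrightarrow> a \<in> Mq 0" by (rule Mq_I) simp_all
lemma Mq0_R: "a \<in> Mq 0 \<Longrightarrow> a \<in> Rq" by (erule Mq_E) simp
lemma Mq_add: "a \<in> Mq r \<Longrightarrow> b \<in> Mq r \<Longrightarrow> a + b \<in> Mq r"
  by (erule Mq_E, erule Mq_E, rule Mq_I[OF Rq_add], assumption+) (simp add: algebra_simps)
lemma Mq_diff: "a \<in> Mq r \<Longrightarrow> b \<in> Mq r \<Longrightarrow> a - b \<in> Mq r"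
  by (erule Mq_E, erule Mq_E, rule Mq_I[OF Rq_diff], assumption+) (simp add: algebra_simps)
lemma Mq_mult: "a \<in> Mq r \<Longrightarrow> b \<in> Mq s \<Longrightarrow> a * b \<in> Mq (r + s)"
  by (erule Mq_E, erule Mq_E, rule Mq_I[OF Rq_mult], assumption+) (simp add: algebra_simps power_add)
lemma Mq_multR: "c \<in> Rq \<Longrightarrow> a \<in> Mq r \<Longrightarrow> c * a \<in> Mq r"
  using Mq_mult[OF Mq_R] by fastforce
lemma Mq_mono: "s \<le> r \<Longrightarrow> a \<in> Mq r \<Longrightarrow> a \<in> Mq s"
proof -
  assume sr: "s \<le> r" and "a \<in> Mq r"
  then obtain b where b: "b \<in> Rq" "a = (1-qq)^(2*r) * b" unfolding Mq_def by auto
  have "2*r = 2*s + 2*(r-s)" using sr by simp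
  hence "a = (1-qq)^(2*s) * ((1-qq)^(2*(r-s)) * b)"
    using b by (simp add: power_add[symmetric] mult.assoc)
  moreover have "(1-qq)^(2*(r-s)) * b \<in> Rq" by (intro Rq_mult Rq_pow Rq_eps b)
  ultimately show ?thesis unfolding Mq_def by blast
qed
lemma Mq_eps2: "a \<in> Mq r \<Longrightarrow> (1-qq)^2 * a \<in> Mq (Suc r)"
  using Mq_mult[of "(1-qq)^2" 1 a r] unfolding Mq_def by (force intro: Rq_1)
lemma Mq_sum: "(\<And>i. i \<in> A \<Longrightarrow> f i \<in> Mq r) \<Longrightarrow> sum f A \<in> Mq r"
  by (induct A rule: infinite_finite_induct) (auto simp: Mq_0 Mq_add)

fun U :: "nat \<Rightarrow> rf poly" where
  "U 0 = 0"
| "U (Suc 0) = 1"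
| "U (Suc (Suc j)) = smult (1+qq) (pCons 0 (U (Suc j))) - smult qq (pCons 0 (pCons 0 (U j)))
     + smult ((1-qq)^2) (pCons 0 (U j))"

lemma U_eval:
  assumes s: "\<alpha> + \<beta> = (1+qq)*w" and p: "\<alpha>*\<beta> = w*(qq*w - (1-qq)^2)"
  shows "poly (U j) w * (\<alpha> - \<beta>) = \<alpha>^j - \<beta>^j"
proof (induction j rule: U.induct)
  case 1 show ?case by simp
next
  case 2 show ?case by simp
next
  case (3 j)
  have "poly (U (Suc (Suc j))) w = (1+qq)*w*poly (U (Suc j)) w - w*(qq*w - (1-qq)^2) * poly (U j) w"
    by (simp add: algebra_simps power2_eq_square)
  also have "\<dots> = (\<alpha> + \<beta>)*poly (U (Suc j)) w - (\<alpha>*\<beta>) * poly (U j) w" by (simp only: s p)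
  finally have e: "poly (U (Suc (Suc j))) w = (\<alpha> + \<beta>)*poly (U (Suc j)) w - (\<alpha>*\<beta>) * poly (U j) w" .
  have "poly (U (Suc (Suc j))) w * (\<alpha> - \<beta>) =
     (\<alpha> + \<beta>)*(poly (U (Suc j)) w * (\<alpha> - \<beta>)) - (\<alpha>*\<beta>) * (poly (U j) w * (\<alpha> - \<beta>))"
    unfolding e by (simp add: algebra_simps)
  also have "\<dots> = (\<alpha> + \<beta>)*(\<alpha>^Suc j - \<beta>^Suc j) - (\<alpha>*\<beta>) * (\<alpha>^j - \<beta>^j)" by (simp only: 3)
  also have "\<dots> = \<alpha>^Suc (Suc j) - \<beta>^Suc (Suc j)" by (simp add: algebra_simps)
  finally show ?case .
qed

lemma U_coeff_step: "coeff (U (Suc (Suc j))) i =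
   (if i = 0 then 0 else (1+qq) * coeff (U (Suc j)) (i-1) + (1-qq)^2 * coeff (U j) (i-1))
   - (if i \<le> 1 then 0 else qq * coeff (U j) (i-1-1))"
  by (simp add: coeff_pCons')

lemma U_coeff_0: "n \<le> i \<Longrightarrow> coeff (U n) i = 0"
proof (induction n arbitrary: i rule: U.induct)
  case 1 show ?case by simp
next
  case 2 thus ?case by (simp add: coeff_1)
next
  case (3 j)
  show ?case unfolding U_coeff_step using "3.prems" "3.IH"[of "i-1"] "3.IH"(2)[of "i-1"] "3.IH"(2)[of "i-1-1"]
    by auto
qed

definition Kq :: "nat \<Rightarrow> rf" where "Kq n = (\<Sum>a<n. qq^a)"

lemma U_top: "coeff (U n) (n - 1) = Kq n"
proof (induction n rule: U.induct)
  case 1 show ?case by (simp add: Kq_def)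
next
  case 2 show ?case by (simp add: Kq_def)
next
  case (3 j)
  have z: "coeff (U j) j = 0" by (rule U_coeff_0) simp
  have KS: "Kq (Suc n) = 1 + qq * Kq n" for n
    unfolding Kq_def sum.lessThan_Suc_shift by (simp add: sum_distrib_left)
  have K: "Kq (Suc (Suc j)) = (1+qq) * Kq (Suc j) - qq * Kq j"
    unfolding KS by (simp add: algebra_simps)
  show ?case
  proof (cases j)
    case 0 thus ?thesis by (simp add: U_coeff_step Kq_def)
  next
    case (Suc j')
    show ?thesis unfolding U_coeff_step K using "3.IH" z Suc by simp
  qed
qed

lemma Rq_1qq: "1 + qq \<in> Rq" by (simp add: Rq_1 Rq_qq Rq_add)

lemma U_coeff_M: "coeff (U n) i \<in> Mq (n - 1 - i)"
proof (induction n arbitrary: i rule: U.induct)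
  case 1 show ?case by (simp add: Mq_0)
next
  case 2 show ?case by (auto simp: coeff_1 Mq_0 intro: Mq_R Rq_1)
next
  case (3 j)
  have A: "(1+qq) * coeff (U (Suc j)) (i-1) + (1-qq)^2 * coeff (U j) (i-1) \<in> Mq (Suc (Suc j) - 1 - i)"
    if "i \<noteq> 0"
  proof (rule Mq_add)
    have "coeff (U (Suc j)) (i-1) \<in> Mq (Suc j - 1 - (i-1))" by (rule "3.IH")
    moreover have "Suc j - 1 - (i-1) = Suc (Suc j) - 1 - i" using that by simp
    ultimately show "(1+qq) * coeff (U (Suc j)) (i-1) \<in> Mq (Suc (Suc j) - 1 - i)"
      using Mq_multR[OF Rq_1qq] by simp
    have "(1-qq)^2 * coeff (U j) (i-1) \<in> Mq (Suc (j - 1 - (i-1)))" by (rule Mq_eps2, rule "3.IH")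
    thus "(1-qq)^2 * coeff (U j) (i-1) \<in> Mq (Suc (Suc j) - 1 - i)"
      by (rule Mq_mono[rotated]) (use that in auto)
  qed
  have B: "qq * coeff (U j) (i-1-1) \<in> Mq (Suc (Suc j) - 1 - i)" if "\<not> i \<le> 1"
  proof -
    have "coeff (U j) (i-1-1) \<in> Mq (j - 1 - (i-1-1))" by (rule "3.IH")
    hence "qq * coeff (U j) (i-1-1) \<in> Mq (j - 1 - (i-1-1))" by (rule Mq_multR[OF Rq_qq])
    thus ?thesis by (rule Mq_mono[rotated]) (use that in auto)
  qed
  show ?case unfolding U_coeff_step using A B
    by (cases "i = 0"; cases "i \<le> 1") (auto intro: Mq_diff Mq_0 simp: Mq_0)
qed

lemma Gt_U:
  assumes u: "u \<noteq> 0" and k: "k \<le> m"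
  shows "Gt qq m u k = (1-qq) * u^m * (1-u^2) * poly (U (m+1-k)) ((1-u)^2/u)"
proof -
  define w where "w = (1-u)^2/u"
  define \<alpha> where "\<alpha> = (1-u)*(1-qq*u)/u"
  define \<beta> where "\<beta> = (1-u)*(qq-u)/u"
  have s: "\<alpha> + \<beta> = (1+qq)*w" using u unfolding \<alpha>_def \<beta>_def w_def
    by (simp add: field_simps power2_eq_square)
  have p: "\<alpha>*\<beta> = w*(qq*w - (1-qq)^2)" using u unfolding \<alpha>_def \<beta>_def w_def
    by (simp add: field_simps power2_eq_square)
  have d: "\<alpha> - \<beta> = (1-qq)*(1-u^2)/u" using u unfolding \<alpha>_def \<beta>_def
    by (simp add: field_simps power2_eq_square)
  have a: "(1-u)*(1-qq*u) = u*\<alpha>" "(1-u)*(qq-u) = u*\<beta>" using u unfolding \<alpha>_def \<beta>_def by simp_all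
  have km: "k + (m+1-k) = Suc m" using k by simp
  have "Gt qq m u k = u^k * u^(m+1-k) * (\<alpha>^(m+1-k) - \<beta>^(m+1-k))"
    unfolding Gt_def a by (simp add: power_mult_distrib algebra_simps)
  also have "\<dots> = u^(Suc m) * (poly (U (m+1-k)) w * (\<alpha> - \<beta>))"
    unfolding U_eval[OF s p] by (simp only: power_add[symmetric] km)
  also have "\<dots> = (1-qq) * u^m * (1-u^2) * poly (U (m+1-k)) w"
    unfolding d using u by (simp add: field_simps)
  finally show ?thesis unfolding w_def .
qed

lemma w_ident:
  assumes u: "u \<noteq> 0" and u2: "u^2 \<noteq> 1"
  shows "(\<Sum>k=0..m. ((1-qq) * ecoef qq m k) * poly (U (m+1-k)) ((1-u)^2/u)) = ((1-u)^2/u)^m"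
proof -
  define w where "w = (1-u)^2/u"
  have nz: "u^m * (1-u^2) \<noteq> 0" using u u2 by simp
  have "u^m * (1-u^2) * (\<Sum>k=0..m. ((1-qq) * ecoef qq m k) * poly (U (m+1-k)) w)
      = (\<Sum>k=0..m. ecoef qq m k * Gt qq m u k)"
    unfolding sum_distrib_left w_def by (rule sum.cong[OF refl]) (simp add: Gt_U[OF u] ac_simps)
  also have "\<dots> = (1-u^2)*(1-u)^(2*m)" by (rule main_u[OF qq_nz qq_pow_ne1])
  also have "\<dots> = u^m * (1-u^2) * w^m"
  proof -
    have "(1-u)^(2*m) = ((1-u)^2)^m" by (simp only: power_mult)
    also have "\<dots> = u^m * w^m" using u unfolding w_def by (simp add: power_divide)
    finally show ?thesis by simp
  qed
  finally show ?thesis using nz u unfolding w_def[symmetric] by simp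
qed

definition Qp :: "nat \<Rightarrow> rf poly" where
  "Qp m = (\<Sum>k=0..m. smult ((1-qq) * ecoef qq m k) (U (m+1-k))) - monom 1 m"

lemma wv_inj: "inj_on (\<lambda>n::nat. (1 - of_nat n)^2 / (of_nat n :: rf)) {2..}"
proof (rule inj_onI)
  fix a b :: nat assume a: "a \<in> {2..}" and b: "b \<in> {2..}"
    and e: "(1 - of_nat a)^2 / (of_nat a :: rf) = (1 - of_nat b)^2 / of_nat b"
  have an: "(of_nat a :: rf) \<noteq> 0" "(of_nat b :: rf) \<noteq> 0" using a b by auto
  hence "(1 - of_nat a)^2 * (of_nat b :: rf) = (1 - of_nat b)^2 * of_nat a" using e by (simp add: field_simps)
  hence "(of_nat a - of_nat b) * (of_nat a * of_nat b - 1 :: rf) = 0" by (simp add: algebra_simps power2_eq_square)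
  moreover have "(of_nat a * of_nat b - 1 :: rf) \<noteq> 0"
  proof
    assume "(of_nat a * of_nat b - 1 :: rf) = 0"
    hence "(of_nat (a * b) :: rf) = of_nat 1" by simp
    hence "a * b = 1" by (simp only: of_nat_eq_iff)
    thus False using a b by simp
  qed
  ultimately have "(of_nat a :: rf) = of_nat b" by simp
  thus "a = b" by simp
qed

lemma Qp_zero: "Qp m = 0"
proof (rule ccontr)
  assume "Qp m \<noteq> 0"
  hence fin: "finite {x. poly (Qp m) x = 0}" by (rule poly_roots_finite)
  have "(\<lambda>n::nat. (1 - of_nat n)^2 / (of_nat n :: rf)) ` {2..} \<subseteq> {x. poly (Qp m) x = 0}"
  proof
    fix x assume "x \<in> (\<lambda>n::nat. (1 - of_nat n)^2 / (of_nat n :: rf)) ` {2..}"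
    then obtain n :: nat where n: "n \<ge> 2" and x: "x = (1 - of_nat n)^2 / of_nat n" by auto
    have u: "(of_nat n :: rf) \<noteq> 0" using n by simp
    have u2: "(of_nat n :: rf)^2 \<noteq> 1"
    proof
      assume "(of_nat n :: rf)^2 = 1"
      hence "(of_nat (n^2) :: rf) = of_nat 1" by simp
      hence "n^2 = 1" by (simp only: of_nat_eq_iff)
      thus False using n by (simp add: power2_eq_square)
    qed
    show "x \<in> {x. poly (Qp m) x = 0}"
      using w_ident[OF u u2, of m] unfolding x by (simp add: Qp_def poly_sum poly_monom)
  qed
  hence "finite ((\<lambda>n::nat. (1 - of_nat n)^2 / (of_nat n :: rf)) ` {2..})" using fin by (rule finite_subset)
  hence "finite ({2..} :: nat set)" using wv_inj by (rule finite_imageD)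
  thus False using infinite_Ici by blast
qed

lemma coeff_rel:
  assumes t: "t \<le> m"
  shows "(\<Sum>k=0..m. ((1-qq) * ecoef qq m k) * coeff (U (m+1-k)) (m-t)) = (if t = 0 then 1 else 0)"
proof -
  have "coeff (Qp m) (m-t) = 0" by (simp add: Qp_zero)
  thus ?thesis using t unfolding Qp_def by (auto simp: coeff_sum)
qed

lemma Rq_Kq: "Kq n \<in> Rq" unfolding Kq_def by (intro Rq_sum Rq_pow Rq_qq)

definition PKL :: "nat \<Rightarrow> nat \<Rightarrow> rf" where "PKL m t = (\<Prod>i\<in>{0..<t}. Kq (m+1-i))"

lemma Rq_PKL: "(\<Prod>i\<in>A. Kq (m+1-i)) \<in> Rq" by (intro Rq_prod Rq_Kq)

lemma rel_split:
  assumes t: "t \<le> m"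
  shows "(1-qq) * ecoef qq m t * Kq (m+1-t) = (if t = 0 then 1 else 0)
           - (\<Sum>k\<in>{0..<t}. ((1-qq) * ecoef qq m k) * coeff (U (m+1-k)) (m-t))"
proof -
  let ?f = "\<lambda>k. ((1-qq) * ecoef qq m k) * coeff (U (m+1-k)) (m-t)"
  have sp: "{0..m} = {0..<t} \<union> {t} \<union> {Suc t..m}" using t by auto
  have "(\<Sum>k=0..m. ?f k) = (\<Sum>k\<in>{0..<t}. ?f k) + ?f t + (\<Sum>k\<in>{Suc t..m}. ?f k)"
    unfolding sp by (subst sum.union_disjoint, auto)+
  moreover have "(\<Sum>k\<in>{Suc t..m}. ?f k) = 0"
    by (rule sum.neutral) (auto intro!: U_coeff_0)
  moreover have "?f t = (1-qq) * ecoef qq m t * Kq (m+1-t)"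
    using U_top[of "m+1-t"] t by (simp add: Suc_diff_le)
  ultimately show ?thesis using coeff_rel[OF t] by (simp add: algebra_simps)
qed

lemma D_M: "t \<le> m \<Longrightarrow> (1-qq) * ecoef qq m t * PKL m (Suc t) \<in> Mq t"
proof (induction t rule: less_induct)
  case (less t)
  have PS: "PKL m (Suc t) = PKL m t * Kq (m+1-t)" by (simp add: PKL_def)
  have "(1-qq) * ecoef qq m t * PKL m (Suc t) = ((1-qq) * ecoef qq m t * Kq (m+1-t)) * PKL m t"
    unfolding PS by (simp add: ac_simps)
  also have "\<dots> = (if t = 0 then 1 else 0) * PKL m t
      - (\<Sum>k\<in>{0..<t}. ((1-qq) * ecoef qq m k * PKL m (Suc k)) *
            (coeff (U (m+1-k)) (m-t) * (\<Prod>i\<in>{Suc k..<t}. Kq (m+1-i))))"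
  proof -
    have "PKL m t = PKL m (Suc k) * (\<Prod>i\<in>{Suc k..<t}. Kq (m+1-i))" if "k \<in> {0..<t}" for k
      unfolding PKL_def using that by (subst prod.atLeastLessThan_concat[symmetric, of 0 "Suc k" t]) auto
    hence "(\<Sum>k\<in>{0..<t}. ((1-qq) * ecoef qq m k) * coeff (U (m+1-k)) (m-t)) * PKL m t
       = (\<Sum>k\<in>{0..<t}. ((1-qq) * ecoef qq m k * PKL m (Suc k)) *
            (coeff (U (m+1-k)) (m-t) * (\<Prod>i\<in>{Suc k..<t}. Kq (m+1-i))))"
      unfolding sum_distrib_right by (intro sum.cong refl) (simp add: ac_simps)
    thus ?thesis unfolding rel_split[OF less.prems] by (simp add: left_diff_distrib)
  qed
  also have "\<dots> \<in> Mq t"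
  proof (rule Mq_diff)
    show "(if t = 0 then 1 else 0) * PKL m t \<in> Mq t"
      by (cases "t = 0") (auto simp: PKL_def Mq_0 intro!: Mq_R Rq_1)
    show "(\<Sum>k\<in>{0..<t}. ((1-qq) * ecoef qq m k * PKL m (Suc k)) *
            (coeff (U (m+1-k)) (m-t) * (\<Prod>i\<in>{Suc k..<t}. Kq (m+1-i)))) \<in> Mq t"
    proof (rule Mq_sum)
      fix k assume k: "k \<in> {0..<t}"
      have 1: "(1-qq) * ecoef qq m k * PKL m (Suc k) \<in> Mq k" using k less by auto
      have "coeff (U (m+1-k)) (m-t) \<in> Mq (m+1-k-1-(m-t))" by (rule U_coeff_M)
      moreover have "m+1-k-1-(m-t) = t - k" using k less.prems by auto
      ultimately have "coeff (U (m+1-k)) (m-t) * (\<Prod>i\<in>{Suc k..<t}. Kq (m+1-i)) \<in> Mq (t-k)"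
        using Mq_multR[OF Rq_PKL] by (simp add: mult.commute)
      from Mq_mult[OF 1 this] show "((1-qq) * ecoef qq m k * PKL m (Suc k)) *
            (coeff (U (m+1-k)) (m-t) * (\<Prod>i\<in>{Suc k..<t}. Kq (m+1-i))) \<in> Mq t"
        using k by simp
    qed
  qed
  finally show ?case .
qed

lemma P_poly:
  assumes t: "t \<le> m"
  shows "P m t \<in> Rq"
proof -
  have K: "1 - qq^(m+1-i) = (1-qq) * Kq (m+1-i)" for i
    unfolding Kq_def by (rule one_diff_power_eq)
  have pr: "(\<Prod>j=0..t. 1 - qq ^ (m + 1 - j)) = (1-qq)^(Suc t) * PKL m (Suc t)"
    unfolding K PKL_def prod.distrib by (simp add: atLeastLessThanSuc_atLeastAtMost)
  obtain a where a: "a \<in> Rq" "(1-qq) * ecoef qq m t * PKL m (Suc t) = (1-qq)^(2*t) * a"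
    using D_M[OF t] by (rule Mq_E)
  have "(-1)^t * P m t = (1-qq)^(Suc t) * PKL m (Suc t) / (1 - qq) ^ (3*t) * ecoef qq m t"
    unfolding Pk_ecoef[OF t] pr ..
  also have "\<dots> = ((1-qq) * ecoef qq m t * PKL m (Suc t)) * (1-qq)^t / (1 - qq) ^ (3*t)"
    by (simp add: ac_simps)
  also have "\<dots> = a"
  proof -
    have e: "(1-qq)^(2*t) * a * (1-qq)^t = a * (1-qq)^(3*t)"
    proof -
      have "3*t = 2*t + t" by simp
      thus ?thesis by (simp only: power_add ac_simps)
    qed
    show ?thesis unfolding a(2) e using eps_nz by simp
  qed
  finally have fa: "(-1)^t * P m t = a" .
  have "((-1::rf)^t * (-1)^t) = 1" by (simp flip: power_mult_distrib)
  hence "P m t = (-1)^t * ((-1)^t * P m t)" by (simp only: mult.assoc[symmetric] mult_1)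
  hence "P m t = (-1)^t * a" by (simp only: fa)
  thus ?thesis using a(1) by (simp add: Rq_pow Rq_mult Rq_uminus Rq_1)
qed


lemma rhs_RR:
  "(\<Sum>k=0..m. (-1) ^ k * P m k *
            ((1 - qq ^ n) ^ (m + 1 - k) * (1 - qq ^ (n + 1)) ^ (m + 1 - k) * qq ^ (k * n)) /
            ((1 - qq ^ 2) * (1 - qq) powi (2 * int m - 3 * int k) *
             (\<Prod>i=0..k. 1 - qq ^ (m + 1 - i)))) = RR m n"
  unfolding RR_def
proof (rule sum.cong[OF refl])
  fix k assume "k \<in> {0..m}"
  hence km: "k \<le> m" by simp
  show "(-1) ^ k * P m k *
            ((1 - qq ^ n) ^ (m + 1 - k) * (1 - qq ^ (n + 1)) ^ (m + 1 - k) * qq ^ (k * n)) /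
            ((1 - qq ^ 2) * (1 - qq) powi (2 * int m - 3 * int k) *
             (\<Prod>i=0..k. 1 - qq ^ (m + 1 - i))) =
        ecoef qq m k / ((1-qq)^(2*m) * (1-qq^2)) *
      ((1 - qq ^ n) ^ (m + 1 - k) * (1 - qq ^ (n + 1)) ^ (m + 1 - k) * qq ^ (k * n))"
    unfolding coef[OF km, symmetric] by (simp only: times_divide_eq_left times_divide_eq_right ac_simps)
qed

theorem theorem1p1:
  fixes m n :: nat
  assumes "n \<ge> 1"
  shows "(\<forall>s \<le> m. \<exists>p :: int poly. P m s = poly_in_q p) \<and>
         S (2*m+1) n = (\<Sum>k=0..m. (-1) ^ k * P m k *
            ((1 - qq ^ n) ^ (m + 1 - k) * (1 - qq ^ (n + 1)) ^ (m + 1 - k) * qq ^ (k * n)) /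
            ((1 - qq ^ 2) * (1 - qq) powi (2 * int m - 3 * int k) *
             (\<Prod>i=0..k. 1 - qq ^ (m + 1 - i))))"
proof
  show "\<forall>s \<le> m. \<exists>p :: int poly. P m s = poly_in_q p"
    using P_poly unfolding Rq_def by blast
  show "S (2*m+1) n = (\<Sum>k=0..m. (-1) ^ k * P m k *
            ((1 - qq ^ n) ^ (m + 1 - k) * (1 - qq ^ (n + 1)) ^ (m + 1 - k) * qq ^ (k * n)) /
            ((1 - qq ^ 2) * (1 - qq) powi (2 * int m - 3 * int k) *
             (\<Prod>i=0..k. 1 - qq ^ (m + 1 - i))))"
    unfolding rhs_RR by (rule S_RR)
qed

end
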